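(* Let $n\ge3$ and let $K_0:[0,\infty)\to[0,\infty)$ be bounded and continuous with $K_0(0)>0$. Then there is a constant $M>0$ such that every radially symmetric nonnegative $C^2$ solution $v$ of $$\Delta v+K_0(|x|)\,v^{\frac{n}{n-2}}=0\ \text{in }\mathbb{R}^n,\qquad \lim_{|x|\to\infty}v(x)=\beta,$$ with any $\beta>0$, satisfies $v\le M$ on $\mathbb{R}^n$; $M$ does not depend on $\beta$. *)

theory Defs
  imports "HOL-Analysis.Analysis"
begin

definition partial_deriv :: "(real^'n \<Rightarrow> real) \<Rightarrow> 'n \<Rightarrow> real^'n \<Rightarrow> real" where
  "partial_deriv f i x = deriv (\<lambda>t. f (x + t *\<^sub>R axis i 1)) 0"

definition C2_on_UNIV :: "(real^'n \<Rightarrow> real) \<Rightarrow> bool" where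
  "C2_on_UNIV f \<longleftrightarrow>
     continuous_on UNIV f \<and>
     (\<forall>i x. (\<lambda>t. f (x + t *\<^sub>R axis i 1)) differentiable (at 0)) \<and>
     (\<forall>i. continuous_on UNIV (partial_deriv f i)) \<and>
     (\<forall>i j x. (\<lambda>t. partial_deriv f i (x + t *\<^sub>R axis j 1)) differentiable (at 0)) \<and>
     (\<forall>i j. continuous_on UNIV (partial_deriv (partial_deriv f i) j))"

definition laplacian :: "(real^'n \<Rightarrow> real) \<Rightarrow> real^'n \<Rightarrow> real" where
  "laplacian f x = (\<Sum>i\<in>UNIV. partial_deriv (partial_deriv f i) i x)"

definition radially_symmetric :: "(real^'n \<Rightarrow> real) \<Rightarrow> bool" where
  "radially_symmetric f \<longleftrightarrow> (\<forall>x y. norm x = norm y \<longrightarrow> f x = f y)"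

end

theory Submission
  imports Defs
begin


lemma mvt_h:
  fixes f f' :: "real \<Rightarrow> real"
  assumes "a < b" "continuous_on {a..b} f"
    "\<And>x. a < x \<Longrightarrow> x < b \<Longrightarrow> (f has_real_derivative f' x) (at x)"
  shows "\<exists>z. a < z \<and> z < b \<and> f b - f a = (b - a) * f' z"
proof -
  obtain l z where "a < z" "z < b" "DERIV f z :> l" "f b - f a = (b - a) * l"
    using MVT[OF assms(1,2)] assms(3) real_differentiable_def by blast
  moreover have "l = f' z" using DERIV_unique calculation assms(3) by blast
  ultimately show ?thesis by blast
qed



lemma half_pow: "n \<ge> 1 \<Longrightarrow> (x - x/2) * ((x/2)^(n-1) * k * c) = (x/2)^n * k * (c::real)"
  by (cases n) auto

lemma ode_bound:
  fixes K :: "real \<Rightarrow> real" and n :: nat and B k \<delta> :: real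
  assumes n3: "n \<ge> 3" and Bpos: "B > 0" and kpos: "k > 0" and dpos: "\<delta> > 0"
    and KB: "\<forall>t\<ge>0. K t \<le> B" and K0: "\<forall>t\<ge>0. K t \<ge> 0"
    and Kk: "\<forall>t. 0 \<le> t \<and> t \<le> \<delta> \<longrightarrow> K t \<ge> k"
  shows "\<exists>M>0. \<forall>\<phi> w. (\<forall>t\<ge>0. \<phi> t \<ge> 0) \<and> continuous_on {0..} \<phi> \<and> continuous_on {0..} w \<and> w 0 = 0 \<and>
     (\<forall>t>0. (\<phi> has_real_derivative -(w t / t^(n-1))) (at t)) \<and>
     (\<forall>t>0. (w has_real_derivative t^(n-1) * K t * \<phi> t powr (real n/(real n - 2))) (at t))
     \<longrightarrow> (\<forall>t\<ge>0. \<phi> t \<le> M)"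
proof -
  define N where "N = real n"
  define p where "p = N / (N - 2)"
  have n1: "n \<ge> 1" using n3 by simp
  have N3: "N \<ge> 3" using n3 unfolding N_def by simp
  have p1: "p > 1" unfolding p_def using N3 by (simp add: field_simps)
  have pm1: "p - 1 = 2 / (N - 2)" unfolding p_def using N3 by (simp add: field_simps)
  have Np: "(N - 2) * p = N" unfolding p_def using N3 by (simp add: field_simps)
  have rn2: "real (n - 2) = N - 2" unfolding N_def using n3 by simp
  define C where "C = (2*\<delta>)^(n-1) / (\<delta> * (\<delta>/2)^n * k)"
  define Y where "Y = C powr ((N-2)/2) + 1"
  define E where "E = Y * (2*\<delta>)^(n-1) / \<delta>"
  define \<theta> where "\<theta> = 1 / (2*B+2)"
  define c0 where "c0 = \<theta>^n * k / (2^n * 2 powr p)"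
  define c2 where "c2 = 2*c0/4^(n-1)"
  define \<gamma> where "\<gamma> = k * c2 powr p"
  define J where "J = nat \<lceil>E/\<gamma>\<rceil>"
  define X where "X = \<theta> * 2^J / \<delta>"
  define M where "M = X powr (N-2) + 1"
  have Cpos: "C > 0" unfolding C_def using dpos kpos by simp
  have Ypos: "Y > 0" unfolding Y_def using powr_ge_zero[of C "(N-2)/2"] by linarith
  have Epos: "E > 0" unfolding E_def using Ypos dpos by simp
  have thpos: "\<theta> > 0" unfolding \<theta>_def using Bpos by simp
  have BB: "2*B \<le> (2*B+2)^2" using Bpos mult_nonneg_nonneg[of B B]
    by (simp add: power2_eq_square algebra_simps)
  have th2B: "\<theta>^2 * B \<le> 1/2" unfolding \<theta>_def using Bpos BB
    by (simp add: power_divide field_simps)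
  have c0pos: "c0 > 0" unfolding c0_def using thpos kpos by simp
  have c2pos: "c2 > 0" unfolding c2_def using c0pos by simp
  have gpos: "\<gamma> > 0" unfolding \<gamma>_def using c2pos kpos by simp
  have JE: "real J * \<gamma> \<ge> E"
  proof -
    have "real J \<ge> E/\<gamma>" unfolding J_def by linarith
    then show ?thesis using gpos by (simp add: field_simps)
  qed
  have Xpos: "X > 0" unfolding X_def using thpos dpos by simp
  have Mpos: "M > 0" unfolding M_def using powr_ge_zero[of X "N-2"] by linarith
  show ?thesis
  proof (intro exI[of _ M] conjI Mpos, (rule allI)+, rule impI)
    fix \<phi> w :: "real \<Rightarrow> real"
    assume H: "(\<forall>t\<ge>0. \<phi> t \<ge> 0) \<and> continuous_on {0..} \<phi> \<and> continuous_on {0..} w \<and> w 0 = 0 \<and>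
     (\<forall>t>0. (\<phi> has_real_derivative -(w t / t^(n-1))) (at t)) \<and>
     (\<forall>t>0. (w has_real_derivative t^(n-1) * K t * \<phi> t powr (real n/(real n - 2))) (at t))"
    have phin: "\<And>t. t \<ge> 0 \<Longrightarrow> \<phi> t \<ge> 0" using H by blast
    have phic: "continuous_on {x..y} \<phi>" if "0 \<le> x" for x y
      by (rule continuous_on_subset[of "{0..}"]) (use H that in auto)
    have wc: "continuous_on {x..y} w" if "0 \<le> x" for x y
      by (rule continuous_on_subset[of "{0..}"]) (use H that in auto)
    have w0: "w 0 = 0" using H by blast
    have phid: "\<And>t. t > 0 \<Longrightarrow> (\<phi> has_real_derivative -(w t / t^(n-1))) (at t)" using H by blast
    have wd: "\<And>t. t > 0 \<Longrightarrow> (w has_real_derivative t^(n-1) * K t * \<phi> t powr p) (at t)"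
      using H unfolding p_def N_def by blast
    have wmono: "w x \<le> w y" if "0 \<le> x" "x \<le> y" for x y
    proof (cases "x = y")
      case False
      then have "x < y" using that by simp
      from mvt_h[OF this wc[OF that(1)], of "\<lambda>t. t^(n-1) * K t * \<phi> t powr p"] wd that
      obtain z where z: "x < z" "z < y" "w y - w x = (y - x) * (z^(n-1) * K z * \<phi> z powr p)"
        by auto
      have "z^(n-1) * K z * \<phi> z powr p \<ge> 0" using z that K0 by simp
      then have "(y - x) * (z^(n-1) * K z * \<phi> z powr p) \<ge> 0" using that by simp
      then show ?thesis using z by linarith
    qed simp
    have wnn: "w t \<ge> 0" if "t \<ge> 0" for t using wmono[of 0 t] that w0 by simp
    have phianti: "\<phi> y \<le> \<phi> x" if "0 \<le> x" "x \<le> y" for x y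
    proof (cases "x = y")
      case False
      then have "x < y" using that by simp
      from mvt_h[OF this phic[OF that(1)], of "\<lambda>t. -(w t / t^(n-1))"] phid that
      obtain z where z: "x < z" "z < y" "\<phi> y - \<phi> x = (y - x) * (-(w z / z^(n-1)))"
        by auto
      have "w z / z^(n-1) \<ge> 0" using z that wnn by simp
      then have "(y - x) * (w z / z^(n-1)) \<ge> 0" using that mult_nonneg_nonneg[of "y-x" "w z / z^(n-1)"] by linarith
      then show ?thesis using z by linarith
    qed simp
    have S4: "r * w r \<le> (2*r)^(n-1) * \<phi> r" if "r > 0" for r
    proof -
      have "r < 2*r" using that by simp
      from mvt_h[OF this phic, of "\<lambda>t. -(w t / t^(n-1))"] phid that
      obtain z where z: "r < z" "z < 2*r" "\<phi> (2*r) - \<phi> r = (2*r - r) * (-(w z / z^(n-1)))"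
        by auto
      have "r * (w z / z^(n-1)) \<le> \<phi> r" using z phin[of "2*r"] that by simp
      moreover have "w r / (2*r)^(n-1) \<le> w z / z^(n-1)"
      proof (rule frac_le)
        show "0 \<le> w z" using wnn z that by simp
        show "w r \<le> w z" using wmono z that by simp
        show "0 < z^(n-1)" using z that by simp
        show "z^(n-1) \<le> (2*r)^(n-1)" using z that by (intro power_mono) auto
      qed
      moreover have "r * (w r / (2*r)^(n-1)) \<le> r * (w z / z^(n-1))"
        using calculation(2) that by (intro mult_left_mono) auto
      ultimately have "r * (w r / (2*r)^(n-1)) \<le> \<phi> r" by linarith
      then show ?thesis using that by (simp add: field_simps)
    qed
    have S5: "(y-x)*(x^(n-1)*k*\<phi> y powr p) \<le> w y - w x" if "0 < x" "x < y" "y \<le> \<delta>" for x y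
    proof -
      from mvt_h[OF that(2) wc, of "\<lambda>t. t^(n-1) * K t * \<phi> t powr p"] wd that
      obtain z where z: "x < z" "z < y" "w y - w x = (y - x) * (z^(n-1) * K z * \<phi> z powr p)"
        by auto
      have a1: "x^(n-1) \<le> z^(n-1)" using z that by (auto intro!: power_mono)
      have a2: "k \<le> K z" using Kk z that by auto
      have "\<phi> y \<le> \<phi> z" using phianti[of z y] z that by simp
      then have a3: "\<phi> y powr p \<le> \<phi> z powr p" using p1 phin[of y] that
        by (intro powr_mono2) auto
      have "x^(n-1)*k*\<phi> y powr p \<le> z^(n-1) * K z * \<phi> z powr p"
      proof -
        have "0 \<le> K z" using K0 z that by simp
        moreover have "0 \<le> z^(n-1)" using z that by simp
        ultimately show ?thesis using a1 a2 a3 that kpos by (intro mult_mono) auto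
      qed
      then show ?thesis using z that by (simp add: mult_left_mono)
    qed
    define a where "a = \<phi> 0"
    have S6: "a - \<phi> r \<le> r^2 * (B * a powr p)" if "r > 0" for r
    proof -
      from mvt_h[OF that phic, of "\<lambda>t. -(w t / t^(n-1))"] phid that
      obtain z where z: "0 < z" "z < r" "\<phi> r - \<phi> 0 = (r - 0) * (-(w z / z^(n-1)))"
        by auto
      from mvt_h[OF z(1) wc, of "\<lambda>t. t^(n-1) * K t * \<phi> t powr p"] wd z
      obtain e where e: "0 < e" "e < z" "w z - w 0 = (z - 0) * (e^(n-1) * K e * \<phi> e powr p)"
        by auto
      have b1: "e^(n-1) \<le> z^(n-1)" using e by (auto intro!: power_mono)
      have b2: "K e \<le> B" "K e \<ge> 0" using KB K0 e by auto
      have "\<phi> e \<le> \<phi> 0" using phianti[of 0 e] e by simp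
      then have b3: "\<phi> e powr p \<le> a powr p" unfolding a_def using p1 phin[of e] e
        by (intro powr_mono2) auto
      have "e^(n-1) * K e * \<phi> e powr p \<le> z^(n-1) * B * a powr p"
        using b1 b2 b3 e z Bpos by (intro mult_mono) auto
      then have "w z \<le> z * (z^(n-1) * B * a powr p)" using e w0 z by (simp add: mult_left_mono)
      then have "w z / z^(n-1) \<le> z * (B * a powr p)" using z by (simp add: field_simps)
      also have "\<dots> \<le> r * (B * a powr p)" using z Bpos by (intro mult_right_mono) auto
      finally have h: "w z / z^(n-1) \<le> r * (B * a powr p)" .
      have "r * (w z / z^(n-1)) \<le> r * (r * (B * a powr p))"
        using h that by (intro mult_left_mono) auto
      then show ?thesis using z unfolding a_def by (simp add: power2_eq_square)
    qed
    have wdE: "w \<delta> < E"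
    proof (rule ccontr)
      assume "\<not> w \<delta> < E"
      then have wE: "w \<delta> \<ge> E" by simp
      have "\<delta> * E \<le> \<delta> * w \<delta>" using wE dpos by simp
      then have "\<delta> * E \<le> (2*\<delta>)^(n-1) * \<phi> \<delta>" using S4[OF dpos] by linarith
      then have phY: "\<phi> \<delta> \<ge> Y" unfolding E_def using dpos by (simp add: field_simps)
      then have phpos: "\<phi> \<delta> > 0" using Ypos by simp
      have "(\<delta> - \<delta>/2)*((\<delta>/2)^(n-1)*k*\<phi> \<delta> powr p) \<le> w \<delta> - w (\<delta>/2)"
        using S5[of "\<delta>/2" \<delta>] dpos by simp
      moreover have "w (\<delta>/2) \<ge> 0" using wnn dpos by simp
      ultimately have "(\<delta> - \<delta>/2)*((\<delta>/2)^(n-1)*k*\<phi> \<delta> powr p) \<le> w \<delta>"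
          by linarith
      then have "(\<delta>/2)^n*k*\<phi> \<delta> powr p \<le> w \<delta>"
        using half_pow[OF n1, of \<delta> k "\<phi> \<delta> powr p"] by linarith
      also have "w \<delta> \<le> (2*\<delta>)^(n-1) * \<phi> \<delta> / \<delta>" using S4[OF dpos] dpos by (simp add: field_simps)
      finally have i1: "(\<delta>/2)^n*k*\<phi> \<delta> powr p \<le> (2*\<delta>)^(n-1) * \<phi> \<delta> / \<delta>" .
      have "\<phi> \<delta> powr p = \<phi> \<delta> * \<phi> \<delta> powr (p - 1)"
        using powr_add[of "\<phi> \<delta>" 1 "p-1"] phpos by simp
      with i1 have "\<phi> \<delta> * ((\<delta>/2)^n*k*\<phi> \<delta> powr (p-1)) \<le> \<phi> \<delta> * ((2*\<delta>)^(n-1) / \<delta>)"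
        by (simp add: field_simps)
      then have "(\<delta>/2)^n*k*\<phi> \<delta> powr (p-1) \<le> (2*\<delta>)^(n-1) / \<delta>"
        by (rule mult_left_le_imp_le[OF _ phpos])
      then have le: "\<phi> \<delta> powr (p-1) \<le> C" unfolding C_def using dpos kpos
        by (simp add: field_simps)
      have "C powr ((N-2)/2) < \<phi> \<delta>" using phY unfolding Y_def by simp
      then have "(C powr ((N-2)/2)) powr (p-1) < \<phi> \<delta> powr (p-1)"
        using p1 by (intro powr_less_mono2) auto
      moreover have "(C powr ((N-2)/2)) powr (p-1) = C"
        using Cpos N3 unfolding powr_powr pm1 by (simp add: field_simps)
      ultimately show False using le by simp
    qed
    have "\<phi> 0 \<le> M"
    proof (rule ccontr)
      assume "\<not> \<phi> 0 \<le> M"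
      then have aM: "a > M" unfolding a_def by simp
      then have apos: "a > 0" using Mpos by simp
      define L where "L = a powr (1/(N-2))"
      have Lpos: "L > 0" unfolding L_def using apos by simp
      have Ln: "L^n = a powr p"
      proof -
        have "L^n = L powr N" using powr_realpow[OF Lpos, of n] unfolding N_def by simp
        also have "\<dots> = a powr p" unfolding L_def powr_powr p_def by simp
        finally show ?thesis .
      qed
      have Ln2: "L^(n-2) = a"
      proof -
        have "L^(n-2) = L powr (N-2)" using powr_realpow[OF Lpos, of "n-2"] rn2 by simp
        also have "\<dots> = a" unfolding L_def powr_powr using N3 apos by (simp add: powr_one)
        finally show ?thesis .
      qed
      have LX: "L > X"
      proof -
        have "X powr (N-2) < a" using aM unfolding M_def by simp
        then have "(X powr (N-2)) powr (1/(N-2)) < L" unfolding L_def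
          using N3 by (intro powr_less_mono2) auto
        moreover have "(X powr (N-2)) powr (1/(N-2)) = X"
          unfolding powr_powr using N3 Xpos by (simp add: powr_one)
        ultimately show ?thesis by simp
      qed
      define \<rho> where "\<rho> = \<theta> / L"
      have rpos: "\<rho> > 0" unfolding \<rho>_def using thpos Lpos by simp
      have rJ: "\<rho> * 2^J < \<delta>"
      proof -
        have "\<theta> * 2^J / \<delta> < L" using LX unfolding X_def .
        then show ?thesis unfolding \<rho>_def using Lpos dpos by (simp add: field_simps)
      qed
      have rd: "\<rho> < \<delta>"
      proof -
        have "\<rho> * 1 \<le> \<rho> * 2^J" using rpos by (intro mult_left_mono) auto
        then show ?thesis using rJ by simp
      qed
      have phr: "\<phi> \<rho> \<ge> a/2"
      proof -
        have "\<rho>^2 * (B * a powr p) = \<theta>^2 * B * (L^n / L^2)"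
          unfolding \<rho>_def Ln[symmetric] by (simp add: field_simps power_divide)
        also have "L^n / L^2 = L^(n-2)" using Lpos n3 by (simp add: power_diff)
        finally have "\<rho>^2 * (B * a powr p) = \<theta>^2 * B * a" using Ln2 by simp
        also have "\<dots> \<le> (1/2) * a" using th2B apos by (intro mult_right_mono) auto
        finally show ?thesis using S6[OF rpos] by simp
      qed
      have wr: "w \<rho> \<ge> c0"
      proof -
        have "(\<rho> - \<rho>/2)*((\<rho>/2)^(n-1)*k*\<phi> \<rho> powr p) \<le> w \<rho> - w (\<rho>/2)"
          using S5[of "\<rho>/2" \<rho>] rpos rd by simp
        moreover have "w (\<rho>/2) \<ge> 0" using wnn rpos by simp
        ultimately have "(\<rho> - \<rho>/2)*((\<rho>/2)^(n-1)*k*\<phi> \<rho> powr p) \<le> w \<rho>"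
          by linarith
        then have i: "(\<rho>/2)^n*k*\<phi> \<rho> powr p \<le> w \<rho>"
          using half_pow[OF n1, of \<rho> k "\<phi> \<rho> powr p"] by linarith
        have "(a/2) powr p \<le> \<phi> \<rho> powr p" using phr apos p1 by (intro powr_mono2) auto
        moreover have "(a/2) powr p = L^n / 2 powr p" using Ln by (simp add: powr_divide)
        ultimately have "(\<rho>/2)^n*k*(L^n / 2 powr p) \<le> (\<rho>/2)^n*k*\<phi> \<rho> powr p"
          using rpos kpos by (intro mult_left_mono) auto
        moreover have "(\<rho>/2)^n*k*(L^n / 2 powr p) = c0"
          unfolding c0_def \<rho>_def using Lpos by (simp add: power_divide field_simps)
        ultimately show ?thesis using i by simp
      qed
      have F6: "\<phi> (2*r) \<ge> c2 / r^(n-2)" if "r \<ge> \<rho>" for r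
      proof -
        have r0: "r > 0" using that rpos by simp
        have "w (2*r) \<ge> c0" using wr wmono[of \<rho> "2*r"] that rpos by simp
        then have "2*r*c0 \<le> 2*r * w (2*r)" using r0 by simp
        moreover have "2*r * w (2*r) \<le> (2*(2*r))^(n-1) * \<phi> (2*r)" using S4[of "2*r"] r0 by simp
        moreover have "2*(2*r) = 4*r" by simp
        ultimately have "2*r*c0 \<le> (4*r)^(n-1) * \<phi> (2*r)" by simp
        then have "2*r*c0 / (4*r)^(n-1) \<le> \<phi> (2*r)" using r0 by (simp add: field_simps)
        moreover have "2*r*c0 / (4*r)^(n-1) = c2 / r^(n-2)"
        proof -
          have nn: "n - 1 = Suc (n - 2)" using n3 by simp
          have rr: "r^(n-1) = r * r^(n-2)" unfolding nn by simp
          have "(4*r)^(n-1) = 4^(n-1) * (r * r^(n-2))"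
            by (simp only: power_mult_distrib rr)
          then show ?thesis unfolding c2_def using r0 by (simp add: field_simps)
        qed
        ultimately show ?thesis by simp
      qed
      have F7: "w (2*r) - w r \<ge> \<gamma>" if "r \<ge> \<rho>" "2*r \<le> \<delta>" for r
      proof -
        have r0: "r > 0" using that rpos by simp
        have f1: "(2*r-r)*(r^(n-1)*k*\<phi> (2*r) powr p) \<le> w (2*r) - w r"
          using S5[of r "2*r"] r0 that by simp
        moreover have "(c2 / r^(n-2)) powr p \<le> \<phi> (2*r) powr p"
          using F6[OF that(1)] p1 c2pos r0 by (intro powr_mono2) auto
        moreover have "(c2 / r^(n-2)) powr p = c2 powr p / r^n"
        proof -
          have "(r^(n-2)) powr p = r powr ((N-2)*p)"
            using powr_realpow[OF r0, of "n-2"] rn2 powr_powr by metis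
          also have "\<dots> = r^n" using Np powr_realpow[OF r0, of n] unfolding N_def by simp
          finally show ?thesis by (simp add: powr_divide)
        qed
        ultimately have e1: "c2 powr p / r^n \<le> \<phi> (2*r) powr p" by simp
        have e2: "r*(r^(n-1)*k*(c2 powr p / r^n)) \<le> r*(r^(n-1)*k*\<phi> (2*r) powr p)"
          using e1 r0 kpos by (intro mult_left_mono) auto
        have rn: "r^n = r * r^(n-1)" using n3 by (cases n) auto
        have e3: "r*(r^(n-1)*k*(c2 powr p / r^n)) = k * c2 powr p"
          using r0 unfolding rn by (simp add: field_simps)
        have "2*r - r = r" by simp
        then show ?thesis unfolding \<gamma>_def using e2 e3 f1 by simp
      qed
      have ind: "\<rho> * 2^j \<le> \<delta> \<longrightarrow> real j * \<gamma> \<le> w (\<rho> * 2^j)" for j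
      proof (induction j)
        case 0
        then show ?case using wnn rpos by simp
      next
        case (Suc j)
        show ?case
        proof
          assume h: "\<rho> * 2^Suc j \<le> \<delta>"
          have "\<rho> * 2^j \<le> \<rho> * (2*2^j)" using rpos by (intro mult_left_mono) auto
          then have h1: "\<rho> * 2^j \<le> \<delta>" using h by simp
          have "w (2 * (\<rho>*2^j)) - w (\<rho>*2^j) \<ge> \<gamma>"
            using F7[of "\<rho>*2^j"] h rpos by (simp add: mult_ac)
          then show "real (Suc j) * \<gamma> \<le> w (\<rho> * 2^Suc j)"
            using Suc h1 by (simp add: mult_ac distrib_left)
        qed
      qed
      have "E \<le> w (\<rho> * 2^J)" using ind[of J] rJ JE by simp
      also have "\<dots> \<le> w \<delta>" using wmono[of "\<rho>*2^J" \<delta>] rJ rpos by simp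
      finally show False using wdE by simp
    qed
    then show "\<forall>t\<ge>0. \<phi> t \<le> M" using phianti[of 0] by force
  qed
qed



lemma partial_has_deriv:
  fixes f :: "real^'n \<Rightarrow> real"
  assumes "\<forall>i x. (\<lambda>t. f (x + t *\<^sub>R axis i 1)) differentiable (at 0)"
  shows "((\<lambda>s. f (y + s *\<^sub>R axis i 1)) has_real_derivative partial_deriv f i (y + s *\<^sub>R axis i 1)) (at s)"
proof -
  have "((\<lambda>t. f ((y + s *\<^sub>R axis i 1) + t *\<^sub>R axis i 1)) has_real_derivative partial_deriv f i (y + s *\<^sub>R axis i 1)) (at 0)"
    using assms unfolding partial_deriv_def by (simp add: DERIV_deriv_iff_real_differentiable)
  moreover have "(\<lambda>t. f ((y + s *\<^sub>R axis i 1) + t *\<^sub>R axis i 1)) = (\<lambda>t. f (y + (t + s) *\<^sub>R axis i 1))"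
    by (simp add: scaleR_add_left add_ac)
  ultimately have "((\<lambda>t. f (y + (t + s) *\<^sub>R axis i 1)) has_real_derivative partial_deriv f i (y + s *\<^sub>R axis i 1)) (at 0)"
    by simp
  then have "((\<lambda>s. f (y + s *\<^sub>R axis i 1)) has_real_derivative partial_deriv f i (y + s *\<^sub>R axis i 1)) (at (0 + s))"
    unfolding DERIV_shift by simp
  then show ?thesis by simp
qed

lemma norm_two_axis:
  fixes t u :: real
  assumes "i \<noteq> j"
  shows "norm (t *\<^sub>R axis i 1 + u *\<^sub>R axis j (1::real) :: real^'n) = sqrt (t^2 + u^2)"
proof -
  let ?x = "t *\<^sub>R axis i 1 + u *\<^sub>R axis j (1::real) :: real^'n"
  have ji: "j \<noteq> i" using assms by simp
  have "inner ?x ?x = t^2 + u^2" using assms ji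
    by (simp add: inner_add_left inner_add_right inner_axis_axis power2_eq_square)
  then show ?thesis by (simp only: norm_eq_sqrt_inner)
qed

lemma radial_phi:
  fixes v :: "real^'n \<Rightarrow> real"
  assumes "radially_symmetric v"
  shows "v x = v (norm x *\<^sub>R axis i 1)"
proof -
  have "norm x = norm (norm x *\<^sub>R axis i (1::real))" by simp
  then show ?thesis using assms unfolding radially_symmetric_def by blast
qed



lemma sqrt_deriv:
  fixes t s :: real
  assumes "t > 0"
  shows "((\<lambda>s. sqrt (t^2 + s^2)) has_real_derivative s / sqrt (t^2 + s^2)) (at s)"
proof -
  have pos: "t^2 + s^2 > 0" using assms by (simp add: add_pos_nonneg)
  have d1: "DERIV (\<lambda>s. t^2 + s^2) s :> 2 * s"
    by (auto intro!: derivative_eq_intros)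
  have d2: "DERIV sqrt (t^2 + s^2) :> inverse (sqrt (t^2 + s^2)) / 2"
    using DERIV_real_sqrt[OF pos] .
  have "((\<lambda>s. sqrt (t^2 + s^2)) has_real_derivative inverse (sqrt (t^2 + s^2)) / 2 * (2 * s)) (at s)"
    using DERIV_chain2[where f=sqrt and g="\<lambda>s. t^2 + s^2" and x=s, OF d2 d1] by simp
  then show ?thesis by (rule DERIV_cong) (simp add: field_simps)
qed

lemma radial_to_ode:
  fixes v :: "real^'n \<Rightarrow> real" and i0 :: 'n
  assumes C2: "C2_on_UNIV v" and rad: "radially_symmetric v"
  defines "e \<equiv> axis i0 (1::real)"
  defines "G \<equiv> \<lambda>t. partial_deriv v i0 (t *\<^sub>R e)"
  defines "H \<equiv> \<lambda>t. partial_deriv (partial_deriv v i0) i0 (t *\<^sub>R e)"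
  shows "\<forall>t. ((\<lambda>t. v (t *\<^sub>R e)) has_real_derivative G t) (at t)"
    and "\<forall>t. (G has_real_derivative H t) (at t)"
    and "continuous_on UNIV G"
    and "\<forall>t>0. laplacian v (t *\<^sub>R e) = H t + (real CARD('n) - 1) * (G t / t)"
proof -
  have dv: "\<forall>i x. (\<lambda>t. v (x + t *\<^sub>R axis i 1)) differentiable (at 0)"
    using C2 unfolding C2_on_UNIV_def by blast
  have dg: "\<forall>j x. (\<lambda>t. partial_deriv v i (x + t *\<^sub>R axis j 1)) differentiable (at 0)" for i
    using C2 unfolding C2_on_UNIV_def by blast
  have gc: "continuous_on UNIV (partial_deriv v i)" for i
    using C2 unfolding C2_on_UNIV_def by blast
  have phid: "((\<lambda>t. v (t *\<^sub>R e)) has_real_derivative G t) (at t)" for t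
    using partial_has_deriv[OF dv, where y=0 and i=i0 and s=t] unfolding G_def e_def by simp
  show "\<forall>t. ((\<lambda>t. v (t *\<^sub>R e)) has_real_derivative G t) (at t)" using phid by blast
  have Gd: "(G has_real_derivative H t) (at t)" for t
    using partial_has_deriv[OF dg, where y=0 and i=i0 and s=t] unfolding G_def H_def e_def by simp
  show "\<forall>t. (G has_real_derivative H t) (at t)" using Gd by blast
  show "continuous_on UNIV G" unfolding G_def
    by (rule continuous_on_compose2[OF gc[of i0]]) (auto intro!: continuous_intros)
  show "\<forall>t>0. laplacian v (t *\<^sub>R e) = H t + (real CARD('n) - 1) * (G t / t)"
  proof (intro allI impI)
    fix t :: real assume tpos: "t > 0"
    define R where "R = (\<lambda>s::real. sqrt (t^2 + s^2))"
    have Rpos: "R s > 0" for s unfolding R_def using tpos by (simp add: add_pos_nonneg)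
    have R0: "R 0 = t" unfolding R_def using tpos by simp
    have Rd: "(R has_real_derivative s / R s) (at s)" for s
      unfolding R_def using sqrt_deriv[OF tpos] .
    have vphi: "v x = v (norm x *\<^sub>R e)" for x
      using radial_phi[OF rad] unfolding e_def by blast
    have off: "partial_deriv (partial_deriv v j) j (t *\<^sub>R e) = G t / t" if ji: "j \<noteq> i0" for j
    proof -
      have pj: "partial_deriv v j (t *\<^sub>R e + s *\<^sub>R axis j 1) = G (R s) * (s / R s)" for s
      proof -
        have fe: "(\<lambda>h. v ((t *\<^sub>R e + s *\<^sub>R axis j 1) + h *\<^sub>R axis j 1)) = (\<lambda>h. v (R (s + h) *\<^sub>R e))"
        proof
          fix h
          have "(t *\<^sub>R e + s *\<^sub>R axis j 1) + h *\<^sub>R axis j 1 = t *\<^sub>R axis i0 1 + (s + h) *\<^sub>R axis j (1::real)"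
            unfolding e_def by (simp add: scaleR_add_left add.assoc)
          moreover have "norm (t *\<^sub>R axis i0 1 + (s + h) *\<^sub>R axis j (1::real) :: real^'n) = R (s + h)"
            unfolding R_def using norm_two_axis[of i0 j t "s+h"] ji by simp
          ultimately show "v ((t *\<^sub>R e + s *\<^sub>R axis j 1) + h *\<^sub>R axis j 1) = v (R (s + h) *\<^sub>R e)"
            using vphi by metis
        qed
        have d1: "((\<lambda>h. s + h) has_real_derivative 1) (at 0)"
          by (auto intro!: derivative_eq_intros)
        have d2: "(R has_real_derivative s / R s) (at ((\<lambda>h. s + h) 0))" using Rd[of s] by simp
        have d3: "((\<lambda>h. R (s + h)) has_real_derivative s / R s * 1) (at 0)"
          using DERIV_chain2[where f=R and g="\<lambda>h. s + h" and x=0, OF d2 d1] by simp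
        have d4: "((\<lambda>t. v (t *\<^sub>R e)) has_real_derivative G (R s)) (at (R ((\<lambda>h. s + h) 0)))"
          using phid[of "R s"] by simp
        have d5: "((\<lambda>h. v (R (s + h) *\<^sub>R e)) has_real_derivative G (R s) * (s / R s * 1)) (at 0)"
          using DERIV_chain2[where f="\<lambda>t. v (t *\<^sub>R e)" and g="\<lambda>h. R (s + h)" and x=0, OF d4 d3] by simp
        show ?thesis unfolding partial_deriv_def fe using DERIV_imp_deriv[OF d5] by simp
      qed
      have fe2: "(\<lambda>s. partial_deriv v j (t *\<^sub>R e + s *\<^sub>R axis j 1)) = (\<lambda>s. G (R s) * (s / R s))"
        using pj by blast
      have e1: "(G has_real_derivative H t) (at (R 0))" using Gd[of t] R0 by simp
      have e2: "((\<lambda>s. G (R s)) has_real_derivative H t * (0 / R 0)) (at 0)"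
        using DERIV_chain2[where f=G and g=R and x=0, OF e1 Rd[of 0]] by simp
      have e3: "((\<lambda>s. s / R s) has_real_derivative (1 * R 0 - 0 * (0 / R 0)) / (R 0 * R 0)) (at 0)"
        using DERIV_divide[where f="\<lambda>s. s" and D=1 and x=0 and s=UNIV and g=R and E="0 / R 0", OF DERIV_ident Rd[of 0]] Rpos[of 0]
        by simp
      have e4: "((\<lambda>s. G (R s) * (s / R s)) has_real_derivative
          H t * (0 / R 0) * (0 / R 0) + (1 * R 0 - 0 * (0 / R 0)) / (R 0 * R 0) * G (R 0)) (at 0)"
        using DERIV_mult[OF e2 e3] by simp
      have "partial_deriv (partial_deriv v j) j (t *\<^sub>R e) = deriv (\<lambda>s. G (R s) * (s / R s)) 0"
        unfolding partial_deriv_def[of "partial_deriv v j"] fe2[symmetric] by simp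
      also have "\<dots> = H t * (0 / R 0) * (0 / R 0) + (1 * R 0 - 0 * (0 / R 0)) / (R 0 * R 0) * G (R 0)"
        using DERIV_imp_deriv[OF e4] .
      also have "\<dots> = G t / t" using R0 tpos by simp
      finally show ?thesis .
    qed
    have diag: "partial_deriv (partial_deriv v i0) i0 (t *\<^sub>R e) = H t" unfolding H_def by simp
    have "laplacian v (t *\<^sub>R e) = partial_deriv (partial_deriv v i0) i0 (t *\<^sub>R e)
        + (\<Sum>j\<in>UNIV - {i0}. partial_deriv (partial_deriv v j) j (t *\<^sub>R e))"
      unfolding laplacian_def by (rule sum.remove) auto
    also have "(\<Sum>j\<in>UNIV - {i0}. partial_deriv (partial_deriv v j) j (t *\<^sub>R e)) = (\<Sum>j\<in>UNIV - {i0}. G t / t)"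
      by (rule sum.cong) (auto simp: off)
    also have "\<dots> = real (CARD('n) - 1) * (G t / t)"
      by (simp add: card_Diff_singleton)
    also have "real (CARD('n) - 1) = real CARD('n) - 1"
      using finite_UNIV_card_ge_0[where 'a='n] by (simp add: of_nat_diff)
    finally show "laplacian v (t *\<^sub>R e) = H t + (real CARD('n) - 1) * (G t / t)" using diag by simp
  qed
qed



theorem proposition7p2:
  fixes K0 :: "real \<Rightarrow> real"
  assumes dim: "CARD('n::finite) \<ge> 3"
    and K0_cont: "continuous_on {0..} K0"
    and K0_bdd: "bounded (K0 ` {0..})"
    and K0_nonneg: "\<forall>t\<ge>0. K0 t \<ge> 0"
    and K0_pos: "K0 0 > 0"
  shows "\<exists>M>0. \<forall>(\<beta>::real) (v::real^'n \<Rightarrow> real).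
           \<beta> > 0 \<and> C2_on_UNIV v \<and> radially_symmetric v \<and> (\<forall>x. v x \<ge> 0) \<and>
           (\<forall>x. laplacian v x + K0 (norm x) * v x powr (real CARD('n) / (real CARD('n) - 2)) = 0) \<and>
           (v \<longlongrightarrow> \<beta>) at_infinity
           \<longrightarrow> (\<forall>x. v x \<le> M)"
proof -
  define n where "n = CARD('n)"
  have n3: "n \<ge> 3" using dim unfolding n_def by simp
  obtain B0 where B0: "\<forall>x\<in>K0 ` {0..}. \<bar>x\<bar> \<le> B0" using K0_bdd bounded_real by blast
  define B where "B = max B0 1"
  have Bpos: "B > 0" unfolding B_def by simp
  have KB: "\<forall>t\<ge>0. K0 t \<le> B"
  proof (intro allI impI)
    fix t :: real assume "t \<ge> 0"
    then have "\<bar>K0 t\<bar> \<le> B0" using B0 by auto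
    then show "K0 t \<le> B" unfolding B_def by simp
  qed
  define k where "k = K0 0 / 2"
  have kpos: "k > 0" unfolding k_def using K0_pos by simp
  have "continuous (at 0 within {0..}) K0"
    using K0_cont unfolding continuous_on_eq_continuous_within by simp
  then have "\<forall>\<epsilon>>0. \<exists>d>0. \<forall>x'\<in>{0..}. dist x' 0 < d \<longrightarrow> dist (K0 x') (K0 0) < \<epsilon>"
    by (simp only: continuous_within_eps_delta)
  then obtain d where d: "d > 0" "\<forall>x'\<in>{0..}. dist x' 0 < d \<longrightarrow> dist (K0 x') (K0 0) < k"
    using kpos by blast
  define \<delta> where "\<delta> = d / 2"
  have dpos: "\<delta> > 0" unfolding \<delta>_def using d by simp
  have Kk: "\<forall>t. 0 \<le> t \<and> t \<le> \<delta> \<longrightarrow> K0 t \<ge> k"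
  proof (intro allI impI)
    fix t :: real assume t: "0 \<le> t \<and> t \<le> \<delta>"
    then have "dist t 0 < d" unfolding \<delta>_def using d by (simp add: dist_real_def)
    then have "dist (K0 t) (K0 0) < k" using d t by simp
    then show "K0 t \<ge> k" unfolding k_def dist_real_def abs_less_iff by linarith
  qed
  obtain M where M: "M > 0" "\<forall>\<phi> w. (\<forall>t\<ge>0. \<phi> t \<ge> 0) \<and> continuous_on {0..} \<phi> \<and> continuous_on {0..} w \<and> w 0 = 0 \<and>
     (\<forall>t>0. (\<phi> has_real_derivative -(w t / t^(n-1))) (at t)) \<and>
     (\<forall>t>0. (w has_real_derivative t^(n-1) * K0 t * \<phi> t powr (real n/(real n - 2))) (at t))
     \<longrightarrow> (\<forall>t\<ge>0. \<phi> t \<le> M)"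
    using ode_bound[OF n3 Bpos kpos dpos KB K0_nonneg Kk] by blast
  show ?thesis
  proof (intro exI[of _ M] conjI allI impI M(1))
    fix \<beta> :: real and v :: "real^'n \<Rightarrow> real" and x :: "real^'n"
    assume hv: "\<beta> > 0 \<and> C2_on_UNIV v \<and> radially_symmetric v \<and> (\<forall>x. v x \<ge> 0) \<and>
           (\<forall>x. laplacian v x + K0 (norm x) * v x powr (real CARD('n) / (real CARD('n) - 2)) = 0) \<and>
           (v \<longlongrightarrow> \<beta>) at_infinity"
    have C2: "C2_on_UNIV v" and rad: "radially_symmetric v" and vnn: "\<And>x. v x \<ge> 0"
      and pde: "\<And>x. laplacian v x + K0 (norm x) * v x powr (real n / (real n - 2)) = 0"
      using hv unfolding n_def by auto
    obtain i0 :: 'n where True by blast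
    define e where "e = axis i0 (1::real)"
    define G where "G = (\<lambda>t. partial_deriv v i0 (t *\<^sub>R e))"
    define H where "H = (\<lambda>t. partial_deriv (partial_deriv v i0) i0 (t *\<^sub>R e))"
    have R1: "\<forall>t. ((\<lambda>t. v (t *\<^sub>R e)) has_real_derivative G t) (at t)"
      and R2: "\<forall>t. (G has_real_derivative H t) (at t)"
      and R3: "continuous_on UNIV G"
      and R4: "\<forall>t>0. laplacian v (t *\<^sub>R e) = H t + (real CARD('n) - 1) * (G t / t)"
      using radial_to_ode[OF C2 rad, of i0] unfolding e_def G_def H_def by auto
    define \<phi> where "\<phi> = (\<lambda>t. v (t *\<^sub>R e))"
    define w where "w = (\<lambda>t. -(t^(n-1) * G t))"
    define p where "p = real n / (real n - 2)"
    have h1: "\<forall>t\<ge>0. \<phi> t \<ge> 0" unfolding \<phi>_def using vnn by simp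
    have h2: "continuous_on {0..} \<phi>"
      by (rule continuous_at_imp_continuous_on) (use R1 DERIV_isCont in \<open>auto simp: \<phi>_def\<close>)
    have h3: "continuous_on {0..} w" unfolding w_def
      by (intro continuous_intros continuous_on_subset[OF R3]) auto
    have h4: "w 0 = 0" unfolding w_def using n3 by simp
    have h5: "\<forall>t>0. (\<phi> has_real_derivative -(w t / t^(n-1))) (at t)"
    proof (intro allI impI)
      fix t :: real assume "t > 0"
      then have "G t = -(w t / t^(n-1))" unfolding w_def by simp
      then show "(\<phi> has_real_derivative -(w t / t^(n-1))) (at t)"
        using R1 unfolding \<phi>_def by metis
    qed
    have h6: "\<forall>t>0. (w has_real_derivative t^(n-1) * K0 t * \<phi> t powr p) (at t)"
    proof (intro allI impI)
      fix t :: real assume tpos: "t > 0"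
      have p1: "((\<lambda>t. t^(n-1)) has_real_derivative real (n-1) * t^(n-1-Suc 0)) (at t)"
        by (rule DERIV_pow)
      have p2: "((\<lambda>t. t^(n-1) * G t) has_real_derivative
           real (n-1) * t^(n-1-Suc 0) * G t + H t * t^(n-1)) (at t)"
        using DERIV_mult[OF p1 R2[rule_format, of t]] .
      have p3: "(w has_real_derivative -(real (n-1) * t^(n-1-Suc 0) * G t + H t * t^(n-1))) (at t)"
        unfolding w_def using DERIV_minus[OF p2] .
      have nt: "norm (t *\<^sub>R e) = t" unfolding e_def using tpos by simp
      have lap: "H t + (real n - 1) * (G t / t) + K0 t * \<phi> t powr p = 0"
        using pde[of "t *\<^sub>R e"] R4 tpos nt unfolding \<phi>_def p_def n_def by simp
      have nn: "n - 1 = Suc (n - 1 - Suc 0)" using n3 by simp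
      have tt: "t^(n-1) = t * t^(n-1-Suc 0)" by (subst nn) simp
      have rn: "real (n-1) = real n - 1" using n3 by (simp add: of_nat_diff)
      have rn': "real (n - Suc 0) = real n - 1" using n3 by (simp add: of_nat_diff)
      have "K0 t * \<phi> t powr p = -(H t + (real n - 1) * (G t / t))" using lap by linarith
      then have X: "t * (K0 t * \<phi> t powr p) = -(t * H t + (real n - 1) * G t)"
        using tpos by (simp add: field_simps)
      have "t^(n-1) * K0 t * \<phi> t powr p = t^(n-1-Suc 0) * (t * (K0 t * \<phi> t powr p))"
        by (subst tt) (simp add: ac_simps)
      also have "\<dots> = t^(n-1-Suc 0) * (-(t * H t + (real n - 1) * G t))" using X by simp
      also have "\<dots> = -(real (n-1) * t^(n-1-Suc 0) * G t + H t * t^(n-1))"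
        by (subst tt) (simp add: rn rn' algebra_simps)
      finally have "t^(n-1) * K0 t * \<phi> t powr p = -(real (n-1) * t^(n-1-Suc 0) * G t + H t * t^(n-1))" .
      then show "(w has_real_derivative t^(n-1) * K0 t * \<phi> t powr p) (at t)"
        using p3 by simp
    qed
    have bound: "\<forall>t\<ge>0. \<phi> t \<le> M"
      using M(2) h1 h2 h3 h4 h5 h6 unfolding p_def by blast
    have "v x = \<phi> (norm x)" unfolding \<phi>_def e_def using radial_phi[OF rad] by blast
    then show "v x \<le> M" using bound by simp
  qed
qed

end
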